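(* Let $R=(\mathbb{C},\mathbb{C}^4,\mathbb{C};u_0,\dots,u_3,v_0,\dots,v_3)$ be a representation of $\mathbf{Q}$ with dimension vector $(1,4,1)$. If $R$ is globally injective, then $R$ is not locally surjective if and only if $R$ has a subrepresentation of dimension vector $(1,b,0)$ for some $b\in\{0,1,2,3,4\}$. If $R$ is globally surjective, then $R$ is not locally injective if and only if $R$ has a subrepresentation of dimension vector $(1,b,0)$ for some $b\in\{0,1,2,3,4\}$.
   Context: The quiver $\mathbf{Q}$ has vertices $-1,0,1$, arrows $\eta_0,\dots,\eta_3:-1\to0$, $\phi_0,\dots,\phi_3:0\to1$ and relations $\phi_i\eta_j+\phi_j\eta_i=0$; a representation consists of vector spaces $V_{-1},V_0,V_1$ and linear maps $u_i:V_{-1}\to V_0$, $v_i:V_0\to V_1$ with $v_iu_j+v_ju_i=0$. $R$ is globally injective (resp. surjective) if $\sum\lambda_iu_i$ is injective (resp. $\sum\lambda_iv_i$ is surjective) for all $\lambda\in\mathbb{C}^4\setminus\{0\}$; locally injective (resp. surjective) if this holds for all $[\lambda]\in\mathbb{P}^3$ outside a closed subset of codimension at least 2. *)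

theory Defs
  imports "HOL-Analysis.Analysis"
begin

text \<open>The arrow eta_i is represented by the
  vector u i (the linear map C -> C^4, t |-> t u_i) and the arrow phi_i by the
  covector v i (the linear map C^4 -> C, x |-> sum_k (v i)_k x_k).\<close>

definition umap :: "complex^4 \<Rightarrow> complex \<Rightarrow> complex^4" where
  "umap w t = t *s w"

definition vmap :: "complex^4 \<Rightarrow> complex^4 \<Rightarrow> complex" where
  "vmap w x = (\<Sum>k\<in>UNIV. w $ k * x $ k)"

definition is_rep :: "(4 \<Rightarrow> complex^4) \<Rightarrow> (4 \<Rightarrow> complex^4) \<Rightarrow> bool" where
  "is_rep u v \<longleftrightarrow> (\<forall>i j t. vmap (v i) (umap (u j) t) + vmap (v j) (umap (u i) t) = 0)"

definition lam_u :: "(4 \<Rightarrow> complex^4) \<Rightarrow> complex^4 \<Rightarrow> complex \<Rightarrow> complex^4" where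
  "lam_u u l t = (\<Sum>i\<in>UNIV. l $ i *s umap (u i) t)"

definition lam_v :: "(4 \<Rightarrow> complex^4) \<Rightarrow> complex^4 \<Rightarrow> complex^4 \<Rightarrow> complex" where
  "lam_v v l x = (\<Sum>i\<in>UNIV. l $ i * vmap (v i) x)"

definition globally_injective where
  "globally_injective u \<longleftrightarrow> (\<forall>l. l \<noteq> 0 \<longrightarrow> inj (lam_u u l))"

definition globally_surjective where
  "globally_surjective v \<longleftrightarrow> (\<forall>l. l \<noteq> 0 \<longrightarrow> surj (lam_v v l))"

definition poly_fun :: "(complex^4 \<Rightarrow> complex) \<Rightarrow> bool" where
  "poly_fun f \<longleftrightarrow> (\<exists>A c. finite A \<and>
     (\<forall>x. f x = (\<Sum>\<alpha>\<in>A. c \<alpha> * (\<Prod>i\<in>UNIV. (x $ i) ^ (\<alpha> i)))))"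

definition zclosed :: "(complex^4) set \<Rightarrow> bool" where
  "zclosed Z \<longleftrightarrow> (\<exists>F. (\<forall>f\<in>F. poly_fun f) \<and> Z = {x. \<forall>f\<in>F. f x = 0})"

text \<open>Cones: closed subsets of P^3 correspond to Zariski closed cones in C^4.\<close>
definition is_cone :: "(complex^4) set \<Rightarrow> bool" where
  "is_cone Z \<longleftrightarrow> (\<forall>x\<in>Z. \<forall>c. c *s x \<in> Z)"

definition zirreducible :: "(complex^4) set \<Rightarrow> bool" where
  "zirreducible Y \<longleftrightarrow> Y \<noteq> {} \<and>
     (\<forall>Y1 Y2. zclosed Y1 \<longrightarrow> zclosed Y2 \<longrightarrow> Y \<subseteq> Y1 \<union> Y2 \<longrightarrow> Y \<subseteq> Y1 \<or> Y \<subseteq> Y2)"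

definition kdim_le :: "(complex^4) set \<Rightarrow> nat \<Rightarrow> bool" where
  "kdim_le Z d \<longleftrightarrow> \<not> (\<exists>Y. (\<forall>k\<le>Suc d. zclosed (Y k) \<and> zirreducible (Y k) \<and> Y k \<subseteq> Z)
       \<and> (\<forall>k<Suc d. Y k \<subset> Y (Suc k)))"

text \<open>A closed subset of P^3 of codimension at least 2 (projective dimension
  at most 1) = a Zariski closed cone in C^4 of (affine) dimension at most 2.\<close>
definition codim2_closed :: "(complex^4) set \<Rightarrow> bool" where
  "codim2_closed Z \<longleftrightarrow> zclosed Z \<and> is_cone Z \<and> kdim_le Z 2"

definition locally_injective where
  "locally_injective u \<longleftrightarrow>
     (\<exists>Z. codim2_closed Z \<and> (\<forall>l. l \<noteq> 0 \<longrightarrow> l \<notin> Z \<longrightarrow> inj (lam_u u l)))"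

definition locally_surjective where
  "locally_surjective v \<longleftrightarrow>
     (\<exists>Z. codim2_closed Z \<and> (\<forall>l. l \<noteq> 0 \<longrightarrow> l \<notin> Z \<longrightarrow> surj (lam_v v l)))"

text \<open>Subrepresentation of dimension vector (1,b,0): W_{-1} = C,
  W_0 a b-dimensional subspace of C^4, W_1 = 0, stable under all arrows.\<close>
definition has_subrep_1b0 :: "(4 \<Rightarrow> complex^4) \<Rightarrow> (4 \<Rightarrow> complex^4) \<Rightarrow> nat \<Rightarrow> bool" where
  "has_subrep_1b0 u v b \<longleftrightarrow> (\<exists>W. vec.subspace W \<and> vec.dim W = b \<and>
     (\<forall>i t. umap (u i) t \<in> W) \<and> (\<forall>i. \<forall>x\<in>W. vmap (v i) x = 0))"

end

theory Submission
  imports Defs "Subresultants.Subresultant_Gcd" "HOL-Computational_Algebra.Field_as_Ring"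
begin

no_notation Matrix.vec_index (infixl "$" 100)


definition mon :: "(4 \<Rightarrow> nat) \<Rightarrow> complex^4 \<Rightarrow> complex" where
  "mon \<alpha> x = (\<Prod>i\<in>UNIV. (x $ i) ^ (\<alpha> i))"

lemma poly_fun_mon: "poly_fun f \<longleftrightarrow> (\<exists>A c. finite A \<and> (\<forall>x. f x = (\<Sum>\<alpha>\<in>A. c \<alpha> * mon \<alpha> x)))"
  unfolding poly_fun_def mon_def by simp

lemma poly_fun_intro: "finite A \<Longrightarrow> (\<And>x. f x = (\<Sum>\<alpha>\<in>A. c \<alpha> * mon \<alpha> x)) \<Longrightarrow> poly_fun f"
  unfolding poly_fun_mon by blast

lemma pf_const: "poly_fun (\<lambda>x. k)"
  unfolding poly_fun_mon
  by (rule exI[of _ "{\<lambda>_. 0}"], rule exI[of _ "\<lambda>_. k"]) (simp add: mon_def)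

lemma pf_coord: "poly_fun (\<lambda>x. x $ i)"
proof -
  have "mon (\<lambda>j. if j = i then 1 else 0) x = x $ i" for x
  proof -
    have "mon (\<lambda>j. if j = i then 1 else 0) x = (\<Prod>j\<in>UNIV. if j = i then x $ j else 1)"
      unfolding mon_def by (rule prod.cong) auto
    also have "\<dots> = x $ i" by (simp add: prod.delta)
    finally show ?thesis .
  qed
  then show ?thesis unfolding poly_fun_mon
    by (intro exI[of _ "{\<lambda>j. if j = i then 1 else 0}"] exI[of _ "\<lambda>_. 1"]) simp
qed

lemma pf_add: assumes "poly_fun f" "poly_fun g" shows "poly_fun (\<lambda>x. f x + g x)"
proof -
  from assms(1) obtain A c where A: "finite A" "\<And>x. f x = (\<Sum>\<alpha>\<in>A. c \<alpha> * mon \<alpha> x)"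
    unfolding poly_fun_mon by blast
  from assms(2) obtain B d where B: "finite B" "\<And>x. g x = (\<Sum>\<alpha>\<in>B. d \<alpha> * mon \<alpha> x)"
    unfolding poly_fun_mon by blast
  have e: "(\<Sum>\<alpha>\<in>S. h \<alpha>) = (\<Sum>\<alpha>\<in>A\<union>B. if \<alpha> \<in> S then h \<alpha> else 0)" if "S \<subseteq> A \<union> B" for S and h :: "_ \<Rightarrow> complex"
  proof -
    have "(A \<union> B) \<inter> S = S" using that by blast
    then show ?thesis using sum.inter_restrict[of "A \<union> B" h S] A(1) B(1) by simp
  qed
  have "f x + g x = (\<Sum>\<alpha>\<in>A\<union>B. ((if \<alpha> \<in> A then c \<alpha> else 0) + (if \<alpha> \<in> B then d \<alpha> else 0)) * mon \<alpha> x)" for x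
    unfolding A(2) B(2) e[of A "\<lambda>\<alpha>. c \<alpha> * mon \<alpha> x", OF Un_upper1] e[of B "\<lambda>\<alpha>. d \<alpha> * mon \<alpha> x", OF Un_upper2]
      sum.distrib[symmetric] by (rule sum.cong[OF refl]) (simp add: distrib_right)
  from poly_fun_intro[OF _ this] show ?thesis using A(1) B(1) by simp
qed

lemma mon_add: "mon (\<lambda>i. a i + b i) x = mon a x * mon b x"
  unfolding mon_def by (simp add: power_add prod.distrib)

lemma pf_mult: assumes "poly_fun f" "poly_fun g" shows "poly_fun (\<lambda>x. f x * g x)"
proof -
  from assms(1) obtain A c where A: "finite A" "\<And>x. f x = (\<Sum>\<alpha>\<in>A. c \<alpha> * mon \<alpha> x)"
    unfolding poly_fun_mon by blast
  from assms(2) obtain B d where B: "finite B" "\<And>x. g x = (\<Sum>\<alpha>\<in>B. d \<alpha> * mon \<alpha> x)"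
    unfolding poly_fun_mon by blast
  let ?s = "\<lambda>p :: (4 \<Rightarrow> nat) \<times> (4 \<Rightarrow> nat). (\<lambda>i. fst p i + snd p i)"
  let ?h = "\<lambda>p. c (fst p) * d (snd p)"
  have "f x * g x = (\<Sum>\<gamma>\<in>?s ` (A \<times> B). (\<Sum>p\<in>{p\<in>A \<times> B. ?s p = \<gamma>}. ?h p) * mon \<gamma> x)" for x
  proof -
    have "f x * g x = (\<Sum>\<alpha>\<in>A. \<Sum>\<beta>\<in>B. c \<alpha> * d \<beta> * mon (\<lambda>i. \<alpha> i + \<beta> i) x)"
      unfolding A(2) B(2) sum_product mon_add by (simp add: algebra_simps)
    also have "\<dots> = (\<Sum>p\<in>A \<times> B. ?h p * mon (?s p) x)"
      by (simp add: sum.cartesian_product split_def)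
    also have "\<dots> = (\<Sum>\<gamma>\<in>?s ` (A \<times> B). \<Sum>p\<in>{p\<in>A \<times> B. ?s p = \<gamma>}. ?h p * mon (?s p) x)"
      by (rule sum.image_gen) (use A(1) B(1) in simp)
    also have "\<dots> = (\<Sum>\<gamma>\<in>?s ` (A \<times> B). (\<Sum>p\<in>{p\<in>A \<times> B. ?s p = \<gamma>}. ?h p) * mon \<gamma> x)"
      by (rule sum.cong[OF refl]) (simp add: sum_distrib_right)
    finally show ?thesis .
  qed
  from poly_fun_intro[OF _ this] show ?thesis using A(1) B(1) by simp
qed

lemma pf_sum: "finite S \<Longrightarrow> (\<And>s. s \<in> S \<Longrightarrow> poly_fun (f s)) \<Longrightarrow> poly_fun (\<lambda>x. \<Sum>s\<in>S. f s x)"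
  by (induction S rule: finite_induct) (auto intro: pf_add pf_const)

lemma pf_prod: "finite S \<Longrightarrow> (\<And>s. s \<in> S \<Longrightarrow> poly_fun (f s)) \<Longrightarrow> poly_fun (\<lambda>x. \<Prod>s\<in>S. f s x)"
  by (induction S rule: finite_induct) (auto intro: pf_mult pf_const)

lemma pf_pow: "poly_fun f \<Longrightarrow> poly_fun (\<lambda>x. f x ^ n)"
  by (induction n) (auto intro: pf_mult pf_const)

lemma pf_diff: assumes "poly_fun f" "poly_fun g" shows "poly_fun (\<lambda>x. f x - g x)"
proof -
  have "poly_fun (\<lambda>x. f x + (-1) * g x)" by (intro pf_add pf_mult pf_const assms)
  then show ?thesis by simp
qed

lemma pf_dot: "poly_fun (\<lambda>x. vmap w x)"
  unfolding vmap_def by (intro pf_sum pf_mult pf_const pf_coord) auto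

lemma pf_upoly: "poly_fun (\<lambda>x. poly c (x $ i))"
  unfolding poly_altdef by (intro pf_sum pf_mult pf_const pf_pow pf_coord) auto



definition ev :: "complex poly poly \<Rightarrow> complex \<Rightarrow> complex \<Rightarrow> complex" where
  "ev p s t = poly (poly p [:t:]) s"

lemma ev_add[simp]: "ev (p + q) s t = ev p s t + ev q s t" by (simp add: ev_def)
lemma ev_mult[simp]: "ev (p * q) s t = ev p s t * ev q s t" by (simp add: ev_def)
lemma ev_const[simp]: "ev [:[:c:]:] s t = c" by (simp add: ev_def)
lemma ev_s: "ev [:[:0,1:]:] s t = s" by (simp add: ev_def)
lemma ev_t: "ev [:0,1:] s t = t" by (simp add: ev_def)
lemma ev_sum: "ev (\<Sum>i\<in>S. f i) s t = (\<Sum>i\<in>S. ev (f i) s t)"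
  by (induction S rule: infinite_finite_induct) (auto simp: ev_def)
lemma ev_prod: "ev (\<Prod>i\<in>S. f i) s t = (\<Prod>i\<in>S. ev (f i) s t)"
  by (induction S rule: infinite_finite_induct) (auto simp: ev_def)
lemma ev_pow: "ev (p ^ n) s t = ev p s t ^ n"
  by (induction n) (auto simp: ev_def)

lemma ev_map: "ev p s t = poly (map_poly (\<lambda>c. poly c s) p) t"
  unfolding ev_def
proof (induction p)
  case 0
  show ?case by simp
next
  case (pCons a p)
  have m: "map_poly (\<lambda>c. poly c s) (pCons a p) = pCons (poly a s) (map_poly (\<lambda>c. poly c s) p)"
    by (rule Polynomial.map_poly_pCons) simp
  have "poly (poly (pCons a p) [:t:]) s = poly a s + t * poly (poly p [:t:]) s"
    by simp
  also have "\<dots> = poly (map_poly (\<lambda>c. poly c s) (pCons a p)) t"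
    unfolding m poly_pCons pCons.IH ..
  finally show ?case .
qed

lemma ev_expand: "ev p a b = (\<Sum>k\<le>degree p. \<Sum>j\<le>degree (coeff p k). coeff (coeff p k) j * a ^ j * b ^ k)"
proof -
  have "ev p a b = (\<Sum>k\<le>degree p. poly (coeff p k) a * b ^ k)"
    unfolding ev_def poly_altdef[of p] by (simp add: poly_sum poly_monom)
  also have "\<dots> = (\<Sum>k\<le>degree p. \<Sum>j\<le>degree (coeff p k). coeff (coeff p k) j * a ^ j * b ^ k)"
    by (rule sum.cong[OF refl], subst poly_altdef[of "coeff p k" for k]) (simp add: sum_distrib_right)
  finally show ?thesis .
qed

lemma pf_ev: "poly_fun (\<lambda>x. ev p (vmap w1 x) (vmap w2 x))"
  unfolding ev_expand by (intro pf_sum pf_mult pf_const pf_pow pf_dot) auto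

definition bpf :: "(complex \<Rightarrow> complex \<Rightarrow> complex) \<Rightarrow> bool" where
  "bpf h \<longleftrightarrow> (\<exists>p. \<forall>s t. h s t = ev p s t)"

lemma bpf_const: "bpf (\<lambda>s t. c)" unfolding bpf_def by (rule exI[of _ "[:[:c:]:]"]) simp
lemma bpf_add: "bpf f \<Longrightarrow> bpf g \<Longrightarrow> bpf (\<lambda>s t. f s t + g s t)"
  unfolding bpf_def by (metis ev_add)
lemma bpf_mult: "bpf f \<Longrightarrow> bpf g \<Longrightarrow> bpf (\<lambda>s t. f s t * g s t)"
  unfolding bpf_def by (metis ev_mult)
lemma bpf_sum: "finite S \<Longrightarrow> (\<And>i. i \<in> S \<Longrightarrow> bpf (f i)) \<Longrightarrow> bpf (\<lambda>s t. \<Sum>i\<in>S. f i s t)"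
  by (induction S rule: finite_induct) (auto intro: bpf_add bpf_const)
lemma bpf_prod: "finite S \<Longrightarrow> (\<And>i. i \<in> S \<Longrightarrow> bpf (f i)) \<Longrightarrow> bpf (\<lambda>s t. \<Prod>i\<in>S. f i s t)"
  by (induction S rule: finite_induct) (auto intro: bpf_mult bpf_const)
lemma bpf_pow: "bpf f \<Longrightarrow> bpf (\<lambda>s t. f s t ^ n)"
  by (induction n) (auto intro: bpf_mult bpf_const)
lemma bpf_lin: "bpf (\<lambda>s t. s * a + t * b)"
proof -
  have "ev ([:[:0,1:]:] * [:[:a:]:] + [:0,1:] * [:[:b:]:]) s t = s * a + t * b" for s t
    by (simp only: ev_add ev_mult ev_s ev_t ev_const)
  then show ?thesis unfolding bpf_def by metis
qed

lemma pullback: assumes "poly_fun F" shows "\<exists>p. \<forall>s t. F (s *s P + t *s Q) = ev p s t"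
proof -
  from assms obtain A c where A: "finite A" "\<And>x. F x = (\<Sum>\<alpha>\<in>A. c \<alpha> * (\<Prod>i\<in>UNIV. (x $ i) ^ (\<alpha> i)))"
    unfolding poly_fun_def by blast
  have "bpf (\<lambda>s t. \<Sum>\<alpha>\<in>A. c \<alpha> * (\<Prod>i\<in>UNIV. (s * P $ i + t * Q $ i) ^ (\<alpha> i)))"
    by (intro bpf_sum bpf_mult bpf_const bpf_prod bpf_pow bpf_lin A) auto
  then obtain p where hp: "\<forall>s t. (\<Sum>\<alpha>\<in>A. c \<alpha> * (\<Prod>i\<in>UNIV. (s * P $ i + t * Q $ i) ^ (\<alpha> i))) = ev p s t"
    unfolding bpf_def by (rule exE)
  show ?thesis
  proof (intro exI[of _ p] allI)
    fix s t
    show "F (s *s P + t *s Q) = ev p s t" using hp[rule_format, of s t] unfolding A(2) by simp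
  qed
qed



lemma zclosed_V: "(\<forall>f\<in>F. poly_fun f) \<Longrightarrow> zclosed {x. \<forall>f\<in>F. f x = 0}"
  unfolding zclosed_def by blast

lemma zclosed_1: "poly_fun f \<Longrightarrow> zclosed {x. f x = 0}"
  using zclosed_V[of "{f}"] by simp

lemma zclosed_E: assumes "zclosed Y" "y \<notin> Y"
  obtains f where "poly_fun f" "\<And>x. x \<in> Y \<Longrightarrow> f x = 0" "f y \<noteq> 0"
proof -
  from assms(1) obtain F where F: "\<forall>f\<in>F. poly_fun f" "Y = {x. \<forall>f\<in>F. f x = 0}"
    unfolding zclosed_def by blast
  from assms(2) F(2) obtain f where "f \<in> F" "f y \<noteq> 0" by blast
  then show ?thesis using that F by blast
qed

lemma line_poly: assumes "poly_fun F" shows "\<exists>c. \<forall>t. F (a + t *s b) = poly c t"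
proof -
  from pullback[OF assms, of a b] obtain p where p: "\<forall>s t. F (s *s a + t *s b) = ev p s t" by blast
  show ?thesis
  proof (intro exI allI)
    fix t
    show "F (a + t *s b) = poly (map_poly (\<lambda>c. poly c 1) p) t"
      using p[rule_format, of 1 t] by (simp add: ev_map)
  qed
qed

lemma irr_lin:
  assumes "a0 \<in> Y" "\<And>a b t. a \<in> Y \<Longrightarrow> b \<in> Y \<Longrightarrow> a + t *s (b - a) \<in> Y"
  shows "zirreducible Y"
  unfolding zirreducible_def
proof (intro conjI allI impI)
  show "Y \<noteq> {}" using assms(1) by blast
  fix Y1 Y2 assume c1: "zclosed Y1" and c2: "zclosed Y2" and cov: "Y \<subseteq> Y1 \<union> Y2"
  show "Y \<subseteq> Y1 \<or> Y \<subseteq> Y2"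
  proof (rule ccontr)
    assume "\<not> (Y \<subseteq> Y1 \<or> Y \<subseteq> Y2)"
    then obtain a b where ab: "a \<in> Y" "a \<notin> Y1" "b \<in> Y" "b \<notin> Y2" by blast
    obtain F1 where F1: "poly_fun F1" "\<And>x. x \<in> Y1 \<Longrightarrow> F1 x = 0" "F1 a \<noteq> 0"
      using zclosed_E[OF c1 ab(2)] by blast
    obtain F2 where F2: "poly_fun F2" "\<And>x. x \<in> Y2 \<Longrightarrow> F2 x = 0" "F2 b \<noteq> 0"
      using zclosed_E[OF c2 ab(4)] by blast
    obtain p1 where p1: "\<And>t. F1 (a + t *s (b - a)) = poly p1 t" using line_poly[OF F1(1)] by blast
    obtain p2 where p2: "\<And>t. F2 (a + t *s (b - a)) = poly p2 t" using line_poly[OF F2(1)] by blast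
    have "poly (p1 * p2) t = 0" for t
    proof -
      have "a + t *s (b - a) \<in> Y1 \<union> Y2" using assms(2)[OF ab(1) ab(3)] cov by blast
      then have "F1 (a + t *s (b - a)) = 0 \<or> F2 (a + t *s (b - a)) = 0" using F1(2) F2(2) by blast
      then show ?thesis unfolding poly_mult p1[symmetric] p2[symmetric] by auto
    qed
    then have "p1 * p2 = 0" using poly_all_0_iff_0 by blast
    moreover have "poly p1 0 \<noteq> 0" using p1[of 0] F1(3) by simp
    moreover have "poly p2 1 \<noteq> 0" using p2[of 1] F2(3) by simp
    ultimately show False by auto
  qed
qed

lemma fin_irr:
  assumes "zirreducible Y" "finite Y" "p \<in> Y" "q \<in> Y"
  shows "p = q"
proof (rule ccontr)
  assume "p \<noteq> q"
  then obtain i where i: "p $ i \<noteq> q $ i" by (auto simp: Finite_Cartesian_Product.vec_eq_iff)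
  define S where "S = {r \<in> Y. r $ i \<noteq> p $ i}"
  define c where "c = (\<Prod>r\<in>S. [:- (r $ i), 1:])"
  have fS: "finite S" unfolding S_def using assms(2) by simp
  have pc: "poly c z = (\<Prod>r\<in>S. z - r $ i)" for z unfolding c_def by (simp add: poly_prod)
  let ?Y1 = "{x. x $ i - p $ i = 0}"
  let ?Y2 = "{x. poly c (x $ i) = 0}"
  have c1: "zclosed ?Y1" by (intro zclosed_1 pf_diff pf_coord pf_const)
  have c2: "zclosed ?Y2" by (intro zclosed_1 pf_upoly)
  have "Y \<subseteq> ?Y1 \<union> ?Y2"
  proof
    fix r assume r: "r \<in> Y"
    show "r \<in> ?Y1 \<union> ?Y2"
    proof (cases "r $ i = p $ i")
      case True then show ?thesis by simp
    next
      case False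
      then have "r \<in> S" unfolding S_def using r by simp
      then have "poly c (r $ i) = 0" unfolding pc using fS by (auto intro: prod_zero)
      then show ?thesis by simp
    qed
  qed
  with assms(1) c1 c2 have "Y \<subseteq> ?Y1 \<or> Y \<subseteq> ?Y2" unfolding zirreducible_def by blast
  moreover have "q \<notin> ?Y1" using i by simp
  moreover have "poly c (p $ i) \<noteq> 0" unfolding pc using fS by (auto simp: S_def)
  ultimately show False using assms(3,4) by blast
qed

lemma three_idx: "\<exists>a b c :: 4. a \<noteq> b \<and> a \<noteq> c \<and> b \<noteq> c"
  by (rule exI[of _ 0], rule exI[of _ 1], rule exI[of _ 2]) simp

lemma not_kdim_UNIV: assumes "UNIV \<subseteq> Z" shows "\<not> kdim_le Z 2"
proof -
  obtain a b c :: 4 where d: "a \<noteq> b" "a \<noteq> c" "b \<noteq> c" using three_idx by blast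
  define Y :: "nat \<Rightarrow> (complex^4) set" where
    "Y = (\<lambda>k. {x. \<forall>f\<in>(if k = 0 then {\<lambda>x. x $ a, \<lambda>x. x $ b, \<lambda>x. x $ c}
       else if k = 1 then {\<lambda>x. x $ b, \<lambda>x. x $ c}
       else if k = 2 then {\<lambda>x. x $ c}
       else {}). f x = 0})"
  have cl: "zclosed (Y k)" for k unfolding Y_def by (rule zclosed_V) (auto intro: pf_coord)
  have ir: "zirreducible (Y k)" for k unfolding Y_def
    by (auto intro!: irr_lin[of 0])
  let ?e = "\<lambda>j. (\<chi> i. if i = j then 1 else 0) :: complex^4"
  have s0: "Y 0 \<subset> Y 1"
  proof
    show "Y 0 \<subseteq> Y 1" unfolding Y_def by auto
    have "?e a \<in> Y 1" "?e a \<notin> Y 0" unfolding Y_def using d by auto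
    then show "Y 0 \<noteq> Y 1" by blast
  qed
  have s1: "Y 1 \<subset> Y 2"
  proof
    show "Y 1 \<subseteq> Y 2" unfolding Y_def by auto
    have "?e b \<in> Y 2" "?e b \<notin> Y 1" unfolding Y_def using d by auto
    then show "Y 1 \<noteq> Y 2" by blast
  qed
  have s2: "Y 2 \<subset> Y 3"
  proof
    show "Y 2 \<subseteq> Y 3" unfolding Y_def by auto
    have "?e c \<in> Y 3" "?e c \<notin> Y 2" unfolding Y_def using d by auto
    then show "Y 2 \<noteq> Y 3" by blast
  qed
  have "\<forall>k<Suc 2. Y k \<subset> Y (Suc k)"
  proof (intro allI impI)
    fix k :: nat assume "k < Suc 2"
    then have "k = 0 \<or> k = 1 \<or> k = 2" by auto
    then show "Y k \<subset> Y (Suc k)" using s0 s1 s2 by (auto simp: numeral_2_eq_2 numeral_3_eq_3)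
  qed
  moreover have "\<forall>k\<le>Suc 2. zclosed (Y k) \<and> zirreducible (Y k) \<and> Y k \<subseteq> Z"
    using cl ir assms by blast
  ultimately show ?thesis unfolding kdim_le_def by blast
qed




lemma vmap_add2: "vmap w (x + y) = vmap w x + vmap w y"
  unfolding vmap_def by (simp add: sum.distrib algebra_simps)
lemma vmap_smult2: "vmap w (c *s x) = c * vmap w x"
  unfolding vmap_def by (simp add: sum_distrib_left algebra_simps)

lemma core:
  assumes rep: "\<And>y. y \<in> Y \<Longrightarrow> y = vmap w1 y *s P + vmap w2 y *s Q"
    and x0: "x0 = vmap w1 x0 *s P + vmap w2 x0 *s Q" "x0 \<notin> Y"
    and cY: "zclosed Y" and irr: "zirreducible Y"
    and cZ: "zclosed Z" and ZY: "Z \<subseteq> Y" and y0: "y0 \<in> Y" "y0 \<notin> Z"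
  shows "finite (vmap w1 ` Z)"
proof -
  let ?E1 = "vmap w1" and ?E2 = "vmap w2"
  obtain F where F: "poly_fun F" "\<And>x. x \<in> Y \<Longrightarrow> F x = 0" "F x0 \<noteq> 0"
    using zclosed_E[OF cY x0(2)] by blast
  obtain p0 where p0: "\<forall>s t. F (s *s P + t *s Q) = ev p0 s t" using pullback[OF F(1)] by blast
  define S where "S = {p. p \<noteq> 0 \<and> (\<forall>y\<in>Y. ev p (?E1 y) (?E2 y) = 0)}"
  have "p0 \<in> S"
  proof -
    have "ev p0 (?E1 x0) (?E2 x0) \<noteq> 0" using p0 F(3) x0(1) by metis
    then have "p0 \<noteq> 0" by (auto simp: ev_def)
    moreover have "ev p0 (?E1 y) (?E2 y) = 0" if "y \<in> Y" for y
      using p0 F(2)[OF that] rep[OF that] by metis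
    ultimately show ?thesis unfolding S_def by blast
  qed
  then obtain f where f: "f \<in> S" and fmin: "\<And>q. q \<in> S \<Longrightarrow> degree f \<le> degree q"
    using ex_has_least_nat[of "\<lambda>p. p \<in> S" p0 degree] by blast
  have f0: "f \<noteq> 0" and fY: "\<And>y. y \<in> Y \<Longrightarrow> ev f (?E1 y) (?E2 y) = 0" using f unfolding S_def by auto
  obtain G where G: "poly_fun G" "\<And>x. x \<in> Z \<Longrightarrow> G x = 0" "G y0 \<noteq> 0"
    using zclosed_E[OF cZ y0(2)] by blast
  obtain g where g: "\<forall>s t. G (s *s P + t *s Q) = ev g s t" using pullback[OF G(1)] by blast
  have Gy: "G y = ev g (?E1 y) (?E2 y)" if "y \<in> Y" for y using g rep[OF that] by metis
  have g0: "g \<noteq> 0" using Gy[OF y0(1)] G(3) by (auto simp: ev_def)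
  have gcd0: "degree (gcd f g) = 0"
  proof (rule ccontr)
    assume dh: "degree (gcd f g) \<noteq> 0"
    define h where "h = gcd f g"
    obtain f1 where f1: "f = h * f1" unfolding h_def by (meson dvdE gcd_dvd1)
    obtain g1 where g1: "g = h * g1" unfolding h_def by (meson dvdE gcd_dvd2)
    have h0: "h \<noteq> 0" and f10: "f1 \<noteq> 0" using f0 f1 by auto
    have "degree f = degree h + degree f1" using f1 h0 f10 degree_mult_eq by blast
    then have df: "degree f1 < degree f" using dh h_def by simp
    let ?H = "\<lambda>x. ev h (?E1 x) (?E2 x)" and ?F1 = "\<lambda>x. ev f1 (?E1 x) (?E2 x)"
    have c1: "zclosed {x. ?H x = 0}" by (rule zclosed_1, rule pf_ev)
    have c2: "zclosed {x. ?F1 x = 0}" by (rule zclosed_1, rule pf_ev)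
    have "Y \<subseteq> {x. ?H x = 0} \<union> {x. ?F1 x = 0}"
    proof
      fix y assume "y \<in> Y"
      then have "?H y * ?F1 y = 0" using fY f1 by simp
      then show "y \<in> {x. ?H x = 0} \<union> {x. ?F1 x = 0}" by simp
    qed
    then have "Y \<subseteq> {x. ?H x = 0} \<or> Y \<subseteq> {x. ?F1 x = 0}"
      using irr c1 c2 unfolding zirreducible_def by blast
    then show False
    proof
      assume "Y \<subseteq> {x. ?H x = 0}"
      then have "?H y0 = 0" using y0(1) by blast
      then have "G y0 = 0" using Gy[OF y0(1)] g1 by simp
      then show False using G(3) by simp
    next
      assume "Y \<subseteq> {x. ?F1 x = 0}"
      then have "f1 \<in> S" using f10 unfolding S_def by blast
      then show False using fmin df by fastforce
    qed
  qed
  have res: "resultant f g \<noteq> 0" using gcd0 resultant_0_gcd by blast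
  define R where "R = resultant f g * lead_coeff f * lead_coeff g"
  have R0: "R \<noteq> 0" unfolding R_def using res f0 g0 by simp
  have rootR: "poly R (?E1 z) = 0" if z: "z \<in> Z" for z
  proof -
    define s where "s = ?E1 z"
    define t where "t = ?E2 z"
    have zY: "z \<in> Y" using z ZY by blast
    have fz: "ev f s t = 0" unfolding s_def t_def using fY[OF zY] .
    have gz: "ev g s t = 0" unfolding s_def t_def using Gy[OF zY] G(2)[OF z] by simp
    show ?thesis
    proof (cases "poly (lead_coeff f) s = 0 \<or> poly (lead_coeff g) s = 0")
      case True
      then show ?thesis unfolding R_def s_def[symmetric] by auto
    next
      case False
      define fs where "fs = map_poly (\<lambda>c. poly c s) f"
      define gs where "gs = map_poly (\<lambda>c. poly c s) g"
      have cf: "coeff fs (degree f) \<noteq> 0" unfolding fs_def using False by (simp add: coeff_map_poly)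
      have cg: "coeff gs (degree g) \<noteq> 0" unfolding gs_def using False by (simp add: coeff_map_poly)
      have df: "degree fs = degree f"
        using degree_map_poly_le[of "\<lambda>c. poly c s" f] le_degree[OF cf] unfolding fs_def by simp
      have dg: "degree gs = degree g"
        using degree_map_poly_le[of "\<lambda>c. poly c s" g] le_degree[OF cg] unfolding gs_def by simp
      have rr: "resultant fs gs = poly (resultant f g) s"
        unfolding fs_def gs_def
        by (rule poly_hom.resultant_map_poly) (use df dg in \<open>simp_all add: fs_def gs_def\<close>)
      have "poly fs t = 0" using fz unfolding fs_def ev_map .
      then have d1: "[:-t, 1:] dvd fs" by (simp add: poly_eq_0_iff_dvd)
      have "poly gs t = 0" using gz unfolding gs_def ev_map .
      then have d2: "[:-t, 1:] dvd gs" by (simp add: poly_eq_0_iff_dvd)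
      have dd: "[:-t, 1:] dvd gcd fs gs" using d1 d2 by simp
      have fs0: "fs \<noteq> 0" using cf by auto
      then have "gcd fs gs \<noteq> 0" by simp
      then have "degree [:-t, 1:] \<le> degree (gcd fs gs)" using dd dvd_imp_degree_le by blast
      then have "degree (gcd fs gs) \<noteq> 0" by simp
      then have "resultant fs gs = 0" using resultant_0_gcd by blast
      then have "poly (resultant f g) s = 0" using rr by simp
      then show ?thesis unfolding R_def s_def[symmetric] by simp
    qed
  qed
  have "vmap w1 ` Z \<subseteq> {s. poly R s = 0}" using rootR by blast
  moreover have "finite {s. poly R s = 0}" using poly_roots_finite[OF R0] .
  ultimately show ?thesis by (rule finite_subset)
qed


lemma kdim_plane:
  assumes rep: "\<And>y. y \<in> Z \<Longrightarrow> y = vmap w1 y *s P + vmap w2 y *s Q"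
  shows "kdim_le Z 2"
  unfolding kdim_le_def
proof (rule notI, elim exE conjE)
  fix Y assume A: "\<forall>k\<le>Suc 2. zclosed (Y k) \<and> zirreducible (Y k) \<and> Y k \<subseteq> Z"
    and B: "\<forall>k<Suc 2. Y k \<subset> Y (Suc k)"
  have cl: "zclosed (Y k)" "zirreducible (Y k)" "Y k \<subseteq> Z" if "k \<le> 3" for k
    using A that by (auto simp: numeral_3_eq_3)
  have s0: "Y 0 \<subset> Y 1" and s1: "Y 1 \<subset> Y 2" and s2: "Y 2 \<subset> Y 3"
    using B by (auto simp: numeral_3_eq_3 numeral_2_eq_2)
  obtain x0 where x0: "x0 \<in> Y 3" "x0 \<notin> Y 2" using s2 by blast
  obtain y0 where y0: "y0 \<in> Y 2" "y0 \<notin> Y 1" using s1 by blast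
  have repY: "y = vmap w1 y *s P + vmap w2 y *s Q" if "y \<in> Y k" "k \<le> 3" for y k
    using rep cl(3)[OF that(2)] that(1) by blast
  have repY': "y = vmap w2 y *s Q + vmap w1 y *s P" if "y \<in> Y k" "k \<le> 3" for y k
    using repY[OF that] by (simp add: add.commute)
  have fin1: "finite (vmap w1 ` Y 1)"
    by (rule core[of "Y 2" w1 P w2 Q x0 "Y 1" y0])
       (use repY[of _ 2] repY[OF x0(1)] x0 y0 cl[of 2] cl[of 1] s1 in auto)
  have fin2: "finite (vmap w2 ` Y 1)"
    by (rule core[of "Y 2" w2 Q w1 P x0 "Y 1" y0])
       (use repY'[of _ 2] repY'[OF x0(1)] x0 y0 cl[of 2] cl[of 1] s1 in auto)
  have "Y 1 \<subseteq> (\<lambda>(s, t). s *s P + t *s Q) ` (vmap w1 ` Y 1 \<times> vmap w2 ` Y 1)"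
  proof
    fix y assume y: "y \<in> Y 1"
    then have "y = (\<lambda>(s, t). s *s P + t *s Q) (vmap w1 y, vmap w2 y)" using repY[of y 1] by simp
    then show "y \<in> (\<lambda>(s, t). s *s P + t *s Q) ` (vmap w1 ` Y 1 \<times> vmap w2 ` Y 1)"
      using y by blast
  qed
  then have finY: "finite (Y 1)" using fin1 fin2 by (meson finite_SigmaI finite_imageI finite_subset)
  have "Y 0 \<noteq> {}" using cl(2)[of 0] unfolding zirreducible_def by simp
  then obtain p where p: "p \<in> Y 0" by blast
  obtain q where q: "q \<in> Y 1" "q \<notin> Y 0" using s0 by blast
  have "p = q" by (rule fin_irr[OF cl(2)[of 1] finY]) (use p q s0 in auto)
  then show False using p q by simp
qed




definition ee :: "4 \<Rightarrow> complex^4" where "ee k = (\<chi> j. if j = k then 1 else 0)"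

lemma ee_nth: "ee k $ k = 1" by (simp add: ee_def)
lemma ee_nz: "ee k \<noteq> 0"
proof
  assume "ee k = 0"
  then have "ee k $ k = 0" by simp
  then show False by (simp add: ee_nth)
qed

lemma vmap_ee2: "vmap w (ee k) = w $ k"
proof -
  have "vmap w (ee k) = (\<Sum>j\<in>UNIV. if j = k then w $ j else 0)"
    unfolding vmap_def ee_def by (rule sum.cong) auto
  then show ?thesis by simp
qed

lemma vmap_ee1: "vmap (ee k) w = w $ k"
proof -
  have "vmap (ee k) w = (\<Sum>j\<in>UNIV. if j = k then w $ j else 0)"
    unfolding vmap_def ee_def by (rule sum.cong) auto
  then show ?thesis by simp
qed

lemma vmap_sum1: "vmap (\<Sum>i\<in>S. f i) x = (\<Sum>i\<in>S. vmap (f i) x)"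
  unfolding vmap_def by (simp add: sum_component sum_distrib_right) (rule sum.swap)
lemma vmap_sum2: "vmap w (\<Sum>i\<in>S. f i) = (\<Sum>i\<in>S. vmap w (f i))"
  unfolding vmap_def by (simp add: sum_component sum_distrib_left) (rule sum.swap)
lemma vmap_smult1: "vmap (c *s a) x = c * vmap a x"
  unfolding vmap_def by (simp add: sum_distrib_left algebra_simps)
lemma vmap_zero2: "vmap w 0 = 0" unfolding vmap_def by simp

lemma vmap_umap: "vmap a (umap b t) = t * vmap a b"
  unfolding umap_def by (rule vmap_smult2)

lemma anti: assumes "is_rep u v" shows "vmap (v i) (u j) = - vmap (v j) (u i)"
proof -
  have "vmap (v i) (umap (u j) 1) + vmap (v j) (umap (u i) 1) = 0"
    using assms unfolding is_rep_def by blast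
  then show ?thesis unfolding vmap_umap by (simp add: eq_neg_iff_add_eq_0)
qed

lemma lam_u_eq: "lam_u u l t = t *s (\<Sum>i\<in>UNIV. l $ i *s u i)"
  unfolding lam_u_def umap_def by (simp add: Finite_Cartesian_Product.vec_eq_iff sum_component sum_distrib_left algebra_simps)

lemma lam_v_eq: "lam_v v l x = vmap (\<Sum>i\<in>UNIV. l $ i *s v i) x"
  unfolding lam_v_def vmap_sum1 vmap_smult1 ..

lemma inj_lam_u: "inj (lam_u u l) \<longleftrightarrow> (\<Sum>i\<in>UNIV. l $ i *s u i) \<noteq> 0"
proof
  assume "inj (lam_u u l)"
  then have "lam_u u l 0 \<noteq> lam_u u l 1" by (metis injD zero_neq_one)
  then show "(\<Sum>i\<in>UNIV. l $ i *s u i) \<noteq> 0" unfolding lam_u_eq by auto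
next
  assume nz: "(\<Sum>i\<in>UNIV. l $ i *s u i) \<noteq> 0"
  then obtain k where k: "(\<Sum>i\<in>UNIV. l $ i *s u i) $ k \<noteq> 0" by (auto simp: Finite_Cartesian_Product.vec_eq_iff)
  show "inj (lam_u u l)"
  proof (rule injI)
    fix s t assume "lam_u u l s = lam_u u l t"
    then have "(lam_u u l s) $ k = (lam_u u l t) $ k" by simp
    then show "s = t" using k unfolding lam_u_eq by simp
  qed
qed

lemma surj_lam_v: "surj (lam_v v l) \<longleftrightarrow> (\<Sum>i\<in>UNIV. l $ i *s v i) \<noteq> 0"
proof
  assume s: "surj (lam_v v l)"
  show "(\<Sum>i\<in>UNIV. l $ i *s v i) \<noteq> 0"
  proof
    assume "(\<Sum>i\<in>UNIV. l $ i *s v i) = 0"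
    then have "\<And>x. lam_v v l x = 0" unfolding lam_v_eq vmap_def by simp
    moreover obtain x where "lam_v v l x = 1" using s by (metis surjD)
    ultimately show False by simp
  qed
next
  assume nz: "(\<Sum>i\<in>UNIV. l $ i *s v i) \<noteq> 0"
  define w where "w = (\<Sum>i\<in>UNIV. l $ i *s v i)"
  then obtain k where k: "w $ k \<noteq> 0" using nz by (auto simp: Finite_Cartesian_Product.vec_eq_iff)
  show "surj (lam_v v l)"
  proof (rule surjI)
    fix c
    show "lam_v v l ((c / w $ k) *s ee k) = c"
      unfolding lam_v_eq w_def[symmetric] vmap_smult2 vmap_ee2 using k by simp
  qed
qed

lemma rhs_iff: "(\<exists>b\<in>{0..4}. has_subrep_1b0 u v b) \<longleftrightarrow> (\<forall>i j. vmap (v i) (u j) = 0)"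
proof
  assume "\<exists>b\<in>{0..4}. has_subrep_1b0 u v b"
  then obtain W where W: "\<forall>i t. umap (u i) t \<in> W" "\<forall>i. \<forall>x\<in>W. vmap (v i) x = 0"
    unfolding has_subrep_1b0_def by blast
  have "u j \<in> W" for j using W(1) unfolding umap_def by (metis vector_smult_lid)
  then show "\<forall>i j. vmap (v i) (u j) = 0" using W(2) by blast
next
  assume z: "\<forall>i j. vmap (v i) (u j) = 0"
  define W where "W = vec.span (range u)"
  have sub: "vec.subspace W" unfolding W_def by (rule vec.subspace_span)
  have dim: "vec.dim W \<le> 4" using dim_subset_UNIV_cart_gen[of W] by simp
  have um: "umap (u i) t \<in> W" for i t
    unfolding W_def umap_def by (intro vec.span_scale vec.span_base) simp
  have vz: "vmap (v i) x = 0" if "x \<in> W" for i x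
  proof -
    have "vec.subspace {x. vmap (v i) x = 0}"
      unfolding vec.subspace_def by (simp add: vmap_zero2 vmap_add2 vmap_smult2)
    then show ?thesis using vec.span_induct[of x "range u" "\<lambda>x. vmap (v i) x = 0"] that z
      unfolding W_def by blast
  qed
  have "has_subrep_1b0 u v (vec.dim W)"
    unfolding has_subrep_1b0_def using sub um vz by blast
  then show "\<exists>b\<in>{0..4}. has_subrep_1b0 u v b" using dim by auto
qed

lemma comb_surj:
  fixes w :: "4 \<Rightarrow> complex^4"
  assumes "\<And>l. (\<Sum>i\<in>UNIV. l $ i *s w i) = 0 \<Longrightarrow> l = 0"
  shows "surj (\<lambda>l. \<Sum>i\<in>UNIV. l $ i *s w i)"
proof -
  define U :: "complex^4^4" where "U = (\<chi> k j. w j $ k)"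
  have T: "(\<lambda>l. \<Sum>i\<in>UNIV. l $ i *s w i) = (*v) U"
    by (rule ext) (simp add: Finite_Cartesian_Product.vec_eq_iff U_def matrix_vector_mult_def sum_component mult.commute)
  have lin: "Vector_Spaces.linear (*s) (*s) ((*v) U)" by (rule matrix_vector_mul_linear_gen)
  have "inj ((*v) U)" using vec.linear_inj_iff_eq_0[OF lin] assms unfolding T[symmetric] by blast
  then show ?thesis unfolding T by (rule vec.linear_inj_imp_surj[OF lin])
qed

lemma four_idx: assumes "a \<noteq> (b::4)"
  obtains c d where "c \<noteq> a" "c \<noteq> b" "d \<noteq> a" "d \<noteq> b" "c \<noteq> d" "UNIV = {a, b, c, d}"
proof -
  have "card (UNIV - {a, b}) = 2" using assms by (simp add: card_Diff_subset)
  then obtain c d where cd: "UNIV - {a, b} = {c, d}" "c \<noteq> d" unfolding card_2_iff by blast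
  then have "c \<noteq> a" "c \<noteq> b" "d \<noteq> a" "d \<noteq> b" by blast+
  moreover have "UNIV = {a, b, c, d}" using cd(1) by blast
  ultimately show ?thesis using that cd(2) by blast
qed

lemma plane_Z:
  fixes M :: "4 \<Rightarrow> 4 \<Rightarrow> complex"
  assumes anti: "\<And>i j. M i j = - M j i" and ab: "M a b \<noteq> 0"
  shows "\<exists>Z. codim2_closed Z \<and> (\<forall>l. (\<forall>j. (\<Sum>i\<in>UNIV. M j i * l $ i) = 0) \<longrightarrow> l \<in> Z)"
proof -
  have diag: "M i i = 0" for i using anti[of i i] by simp
  have abd: "a \<noteq> b" using ab diag by auto
  obtain c d where cd: "c \<noteq> a" "c \<noteq> b" "d \<noteq> a" "d \<noteq> b" "c \<noteq> d" and U: "UNIV = {a, b, c, d}"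
    using four_idx[OF abd] by blast
  have sum4: "(\<Sum>i\<in>UNIV. f i) = f a + f b + f c + f d" for f :: "4 \<Rightarrow> complex"
    unfolding U using abd cd by (simp add: algebra_simps)
  define L where "L = (\<lambda>j (l :: complex^4). \<Sum>i\<in>UNIV. M j i * l $ i)"
  define Z where "Z = {l. \<forall>f\<in>{L a, L b}. f l = 0}"
  have cl: "zclosed Z" unfolding Z_def L_def
    by (rule zclosed_V) (auto intro!: pf_sum pf_mult pf_const pf_coord)
  have cone: "is_cone Z" unfolding is_cone_def Z_def L_def
    by (auto simp: sum_distrib_left[symmetric] algebra_simps)
  have ba: "M b a \<noteq> 0" using ab anti[of b a] by simp
  define P :: "complex^4" where "P = (\<chi> i. if i = a then - M b c / M b a else if i = b then - M a c / M a b else if i = c then 1 else 0)"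
  define Q :: "complex^4" where "Q = (\<chi> i. if i = a then - M b d / M b a else if i = b then - M a d / M a b else if i = c then 0 else 1)"
  have rep: "y = vmap (ee c) y *s P + vmap (ee d) y *s Q" if y: "y \<in> Z" for y
  proof -
    have ea: "M a b * y $ b + M a c * y $ c + M a d * y $ d = 0"
      using y unfolding Z_def L_def sum4 by (simp add: diag)
    have eb: "M b a * y $ a + M b c * y $ c + M b d * y $ d = 0"
      using y unfolding Z_def L_def sum4 by (simp add: diag)
    have ea': "M a b * y $ b = - (M a c * y $ c + M a d * y $ d)"
      using ea unfolding eq_neg_iff_add_eq_0 add.assoc .
    have eb': "M b a * y $ a = - (M b c * y $ c + M b d * y $ d)"
      using eb unfolding eq_neg_iff_add_eq_0 add.assoc .
    have ya: "y $ a = y $ c * (- M b c / M b a) + y $ d * (- M b d / M b a)"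
    proof -
      have "y $ a = (M b a * y $ a) / M b a" using ba by simp
      also have "\<dots> = - (M b c * y $ c + M b d * y $ d) / M b a" unfolding eb' ..
      also have "\<dots> = y $ c * (- M b c / M b a) + y $ d * (- M b d / M b a)"
        by (simp add: diff_divide_distrib add_divide_distrib mult.commute)
      finally show ?thesis .
    qed
    have yb: "y $ b = y $ c * (- M a c / M a b) + y $ d * (- M a d / M a b)"
    proof -
      have "y $ b = (M a b * y $ b) / M a b" using ab by simp
      also have "\<dots> = - (M a c * y $ c + M a d * y $ d) / M a b" unfolding ea' ..
      also have "\<dots> = y $ c * (- M a c / M a b) + y $ d * (- M a d / M a b)"
        by (simp add: diff_divide_distrib add_divide_distrib mult.commute)
      finally show ?thesis .
    qed
    show ?thesis unfolding vmap_ee1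
    proof (subst Finite_Cartesian_Product.vec_eq_iff, rule allI)
      fix i :: 4
      have "i \<in> {a, b, c, d}" using U by blast
      then consider "i = a" | "i = b" | "i = c" | "i = d" by blast
      then show "y $ i = (y $ c *s P + y $ d *s Q) $ i"
      proof cases
        case 1
        then show ?thesis using ya unfolding P_def Q_def by simp
      next
        case 2
        then show ?thesis using yb abd unfolding P_def Q_def by simp
      next
        case 3
        then show ?thesis using cd unfolding P_def Q_def by simp
      next
        case 4
        then show ?thesis using cd unfolding P_def Q_def by simp
      qed
    qed
  qed
  have "kdim_le Z 2" by (rule kdim_plane[of Z "ee c" P "ee d" Q]) (use rep in blast)
  then have "codim2_closed Z" unfolding codim2_closed_def using cl cone by blast
  moreover have "\<forall>l. (\<forall>j. (\<Sum>i\<in>UNIV. M j i * l $ i) = 0) \<longrightarrow> l \<in> Z"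
    unfolding Z_def L_def by auto
  ultimately show ?thesis by blast
qed

lemma all_Z: assumes "codim2_closed Z" "\<And>l. l \<noteq> 0 \<Longrightarrow> l \<in> Z" shows False
proof -
  have cone: "is_cone Z" and kd: "kdim_le Z 2" using assms(1) unfolding codim2_closed_def by simp_all
  have e: "ee 0 \<in> Z" by (rule assms(2)[OF ee_nz])
  have "0 *s ee 0 \<in> Z" using cone e unfolding is_cone_def by blast
  then have z: "0 \<in> Z" by simp
  have "UNIV \<subseteq> Z"
  proof
    fix x :: "complex^4"
    show "x \<in> Z" using z assms(2)[of x] by (cases "x = 0") simp_all
  qed
  from not_kdim_UNIV[OF this] kd show False by (rule notE)
qed

theorem mainTheorem9:
  fixes u v :: "4 \<Rightarrow> complex^4"
  assumes "is_rep u v"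
  shows "(globally_injective u \<longrightarrow>
            (\<not> locally_surjective v \<longleftrightarrow> (\<exists>b\<in>{0..4}. has_subrep_1b0 u v b)))
       \<and> (globally_surjective v \<longrightarrow>
            (\<not> locally_injective u \<longleftrightarrow> (\<exists>b\<in>{0..4}. has_subrep_1b0 u v b)))"
proof -
  define M where "M = (\<lambda>i j. vmap (v i) (u j))"
  have antiM: "M i j = - M j i" for i j unfolding M_def by (rule anti[OF assms])
  have ls: "locally_surjective v" if "\<not> (\<forall>i j. M i j = 0)"
  proof -
    from that obtain a b where "M a b \<noteq> 0" by blast
    from plane_Z[of M a b, OF antiM this] obtain Z where Z: "codim2_closed Z"
      "\<And>l. (\<forall>j. (\<Sum>i\<in>UNIV. M j i * l $ i) = 0) \<Longrightarrow> l \<in> Z" by blast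
    have "surj (lam_v v l)" if "l \<noteq> 0" "l \<notin> Z" for l
    proof (rule ccontr)
      assume "\<not> surj (lam_v v l)"
      then have s0: "(\<Sum>i\<in>UNIV. l $ i *s v i) = 0" unfolding surj_lam_v by simp
      have "(\<Sum>i\<in>UNIV. M j i * l $ i) = 0" for j
      proof -
        have "(\<Sum>i\<in>UNIV. M j i * l $ i) = (\<Sum>i\<in>UNIV. - (l $ i * M i j))"
          by (rule sum.cong[OF refl]) (simp add: antiM[of j])
        also have "\<dots> = - (\<Sum>i\<in>UNIV. l $ i * M i j)" by (simp add: sum_negf)
        also have "(\<Sum>i\<in>UNIV. l $ i * M i j) = vmap (\<Sum>i\<in>UNIV. l $ i *s v i) (u j)"
          unfolding vmap_sum1 vmap_smult1 M_def ..
        finally have "(\<Sum>i\<in>UNIV. M j i * l $ i) = - vmap (\<Sum>i\<in>UNIV. l $ i *s v i) (u j)" .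
        then show ?thesis using s0 by (simp add: vmap_def)
      qed
      then show False using Z(2) that by blast
    qed
    then show ?thesis unfolding locally_surjective_def using Z(1) by blast
  qed
  have li: "locally_injective u" if "\<not> (\<forall>i j. M i j = 0)"
  proof -
    from that obtain a b where "M a b \<noteq> 0" by blast
    from plane_Z[of M a b, OF antiM this] obtain Z where Z: "codim2_closed Z"
      "\<And>l. (\<forall>j. (\<Sum>i\<in>UNIV. M j i * l $ i) = 0) \<Longrightarrow> l \<in> Z" by blast
    have "inj (lam_u u l)" if "l \<noteq> 0" "l \<notin> Z" for l
    proof (rule ccontr)
      assume "\<not> inj (lam_u u l)"
      then have s0: "(\<Sum>i\<in>UNIV. l $ i *s u i) = 0" unfolding inj_lam_u by simp
      have "(\<Sum>i\<in>UNIV. M j i * l $ i) = 0" for j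
      proof -
        have "(\<Sum>i\<in>UNIV. M j i * l $ i) = vmap (v j) (\<Sum>i\<in>UNIV. l $ i *s u i)"
          unfolding vmap_sum2 vmap_smult2 M_def by (simp add: mult.commute)
        then show ?thesis using s0 by (simp add: vmap_zero2)
      qed
      then show False using Z(2) that by blast
    qed
    then show ?thesis unfolding locally_injective_def using Z(1) by blast
  qed
  have part1: "\<not> locally_surjective v" if gi: "globally_injective u" and z: "\<forall>i j. M i j = 0"
  proof
    assume "locally_surjective v"
    then obtain Z where Z: "codim2_closed Z" "\<And>l. l \<noteq> 0 \<Longrightarrow> l \<notin> Z \<Longrightarrow> surj (lam_v v l)"
      unfolding locally_surjective_def by blast
    have inj0: "l = 0" if "(\<Sum>i\<in>UNIV. l $ i *s u i) = 0" for l
    proof (rule ccontr)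
      assume "l \<noteq> 0"
      then have "inj (lam_u u l)" using gi unfolding globally_injective_def by blast
      then show False using that unfolding inj_lam_u by simp
    qed
    have v0: "v i = 0" for i
    proof -
      have "v i $ k = 0" for k
      proof -
        have "ee k \<in> range (\<lambda>l. \<Sum>j\<in>UNIV. l $ j *s u j)" using comb_surj[OF inj0] by simp
        then obtain l where l: "ee k = (\<Sum>j\<in>UNIV. l $ j *s u j)" by blast
        have "v i $ k = vmap (v i) (ee k)" by (simp add: vmap_ee2)
        also have "\<dots> = (\<Sum>j\<in>UNIV. l $ j * M i j)" unfolding l vmap_sum2 vmap_smult2 M_def ..
        also have "\<dots> = 0" using z by simp
        finally show ?thesis .
      qed
      then show ?thesis by (simp add: Finite_Cartesian_Product.vec_eq_iff)
    qed
    have "l \<in> Z" if "l \<noteq> 0" for l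
    proof (rule ccontr)
      assume "l \<notin> Z"
      then have "surj (lam_v v l)" using Z(2) that by blast
      then show False unfolding surj_lam_v using v0 by simp
    qed
    then show False using all_Z[OF Z(1)] by blast
  qed
  have part2: "\<not> locally_injective u" if gs: "globally_surjective v" and z: "\<forall>i j. M i j = 0"
  proof
    assume "locally_injective u"
    then obtain Z where Z: "codim2_closed Z" "\<And>l. l \<noteq> 0 \<Longrightarrow> l \<notin> Z \<Longrightarrow> inj (lam_u u l)"
      unfolding locally_injective_def by blast
    have inj0: "l = 0" if "(\<Sum>i\<in>UNIV. l $ i *s v i) = 0" for l
    proof (rule ccontr)
      assume "l \<noteq> 0"
      then have "surj (lam_v v l)" using gs unfolding globally_surjective_def by blast
      then show False using that unfolding surj_lam_v by simp
    qed
    have u0: "u j = 0" for j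
    proof -
      have "u j $ k = 0" for k
      proof -
        have "ee k \<in> range (\<lambda>l. \<Sum>i\<in>UNIV. l $ i *s v i)" using comb_surj[OF inj0] by simp
        then obtain l where l: "ee k = (\<Sum>i\<in>UNIV. l $ i *s v i)" by blast
        have "u j $ k = vmap (ee k) (u j)" by (simp add: vmap_ee1)
        also have "\<dots> = (\<Sum>i\<in>UNIV. l $ i * M i j)" unfolding l vmap_sum1 vmap_smult1 M_def ..
        also have "\<dots> = 0" using z by simp
        finally show ?thesis .
      qed
      then show ?thesis by (simp add: Finite_Cartesian_Product.vec_eq_iff)
    qed
    have "l \<in> Z" if "l \<noteq> 0" for l
    proof (rule ccontr)
      assume "l \<notin> Z"
      then have "inj (lam_u u l)" using Z(2) that by blast
      then show False unfolding inj_lam_u using u0 by simp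
    qed
    then show False using all_Z[OF Z(1)] by blast
  qed
  have rhs: "(\<exists>b\<in>{0..4}. has_subrep_1b0 u v b) \<longleftrightarrow> (\<forall>i j. M i j = 0)"
    unfolding rhs_iff M_def ..
  have A1: "\<exists>b\<in>{0..4}. has_subrep_1b0 u v b" if nls: "\<not> locally_surjective v"
  proof (rule iffD2[OF rhs], rule ccontr)
    assume "\<not> (\<forall>i j. M i j = 0)"
    then have "locally_surjective v" by (rule ls)
    with nls show False by (rule notE)
  qed
  have A2: "\<exists>b\<in>{0..4}. has_subrep_1b0 u v b" if nli: "\<not> locally_injective u"
  proof (rule iffD2[OF rhs], rule ccontr)
    assume "\<not> (\<forall>i j. M i j = 0)"
    then have "locally_injective u" by (rule li)
    with nli show False by (rule notE)
  qed
  have B1: "\<not> locally_surjective v" if "globally_injective u" "\<exists>b\<in>{0..4}. has_subrep_1b0 u v b"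
    by (rule part1[OF that(1) iffD1[OF rhs that(2)]])
  have B2: "\<not> locally_injective u" if "globally_surjective v" "\<exists>b\<in>{0..4}. has_subrep_1b0 u v b"
    by (rule part2[OF that(1) iffD1[OF rhs that(2)]])
  show ?thesis
  proof (rule conjI)
    show "globally_injective u \<longrightarrow> (\<not> locally_surjective v \<longleftrightarrow> (\<exists>b\<in>{0..4}. has_subrep_1b0 u v b))"
    proof (rule impI, rule iffI)
      show "\<not> locally_surjective v \<Longrightarrow> \<exists>b\<in>{0..4}. has_subrep_1b0 u v b" by (rule A1)
      show "globally_injective u \<Longrightarrow> \<exists>b\<in>{0..4}. has_subrep_1b0 u v b \<Longrightarrow> \<not> locally_surjective v" by (rule B1)
    qed
  next
    show "globally_surjective v \<longrightarrow> (\<not> locally_injective u \<longleftrightarrow> (\<exists>b\<in>{0..4}. has_subrep_1b0 u v b))"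
    proof (rule impI, rule iffI)
      show "\<not> locally_injective u \<Longrightarrow> \<exists>b\<in>{0..4}. has_subrep_1b0 u v b" by (rule A2)
      show "globally_surjective v \<Longrightarrow> \<exists>b\<in>{0..4}. has_subrep_1b0 u v b \<Longrightarrow> \<not> locally_injective u" by (rule B2)
    qed
  qed
qed

end
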